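(* Let $\mathcal A=\{r_0,\dots,r_m\}\subset\mathbb Z^n$ with $\mathbb Z\mathcal A=\mathbb Z^n$ and $k\in\mathbb N$. Then $\operatorname{trop}(X^{(k)}_{\mathcal A})$ is empty (equivalently, $X^{(k)}_{\mathcal A}$ does not intersect the torus $T_m=\{x\in(\mathbb P^m)^\vee: x_i\ne0\text{ for all }i\}$) if and only if there exists a polynomial $Q$ in $n$ variables of degree at most $k$ which vanishes at all points of $\mathcal A$ but one.
   Context: $X_{\mathcal A}\subset\mathbb P^m$ is the closure of the image of $(\mathbb C^* )^n\to\mathbb P^m$, $x\mapsto(x^{r_0}:\dots:x^{r_m})$. $X^{(k)}_{\mathcal A}\subset(\mathbb P^m)^\vee$ is its $k$-th dual variety: the closure of the set of hyperplanes containing the $k$-th osculating space $\mathbb P(\operatorname{Im}j_{k,x})$ at some smooth point $x$, where $j_{k,x}$ is the Taylor expansion to order $k$. For a projective variety $X\subset\mathbb P^m$ with affine cone $Y$ and ideal $I$ defined over $\mathbb Q$, $\operatorname{trop}(Y)=\{w\in\mathbb R^{m+1}:\operatorname{in}_w(F)\text{ is not a monomial for all }0\ne F\in I\}$ and $\operatorname{trop}(X)$ is the image of $\operatorname{trop}(Y)$ in $\mathbb R^{m+1}/\mathbb R(1,\dots,1)$. *)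

theory Defs
  imports "HOL-Analysis.Analysis" "HOL-Library.Poly_Mapping"
begin

text \<open>A polynomial in variables x_0, x_1, ... with coefficients in 'c is an element of
  (nat =>0 nat) =>0 'c: a finitely supported map from exponent vectors to coefficients.\<close>

type_synonym 'c mpoly = "(nat \<Rightarrow>\<^sub>0 nat) \<Rightarrow>\<^sub>0 'c"

definition vars_below :: "nat \<Rightarrow> 'c::zero mpoly \<Rightarrow> bool" where
  "vars_below N F \<longleftrightarrow> (\<forall>u::nat \<Rightarrow>\<^sub>0 nat. u \<in> Poly_Mapping.keys F \<longrightarrow> (\<forall>i \<in> Poly_Mapping.keys u. i < N))"

definition total_deg :: "(nat \<Rightarrow>\<^sub>0 nat) \<Rightarrow> nat" where
  "total_deg u = (\<Sum>i\<in>Poly_Mapping.keys u. Poly_Mapping.lookup u i)"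

definition eval_c :: "complex mpoly \<Rightarrow> (nat \<Rightarrow> complex) \<Rightarrow> complex" where
  "eval_c F a = (\<Sum>u\<in>Poly_Mapping.keys F. Poly_Mapping.lookup F u * (\<Prod>i\<in>Poly_Mapping.keys u. a i ^ Poly_Mapping.lookup u i))"

definition eval_q :: "rat mpoly \<Rightarrow> (nat \<Rightarrow> complex) \<Rightarrow> complex" where
  "eval_q F a = (\<Sum>u\<in>Poly_Mapping.keys F. of_rat (Poly_Mapping.lookup F u) * (\<Prod>i\<in>Poly_Mapping.keys u. a i ^ Poly_Mapping.lookup u i))"

definition aff_space :: "nat \<Rightarrow> (nat \<Rightarrow> complex) set" where
  "aff_space m = {a. \<forall>i>m. a i = 0}"

definition zariski_closure :: "nat \<Rightarrow> (nat \<Rightarrow> complex) set \<Rightarrow> (nat \<Rightarrow> complex) set" where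
  "zariski_closure m S = {a \<in> aff_space m. \<forall>F. vars_below (Suc m) F \<longrightarrow>
       (\<forall>b\<in>S. eval_c F b = 0) \<longrightarrow> eval_c F a = 0}"

definition laurent_mono :: "nat \<Rightarrow> (nat \<Rightarrow> int) \<Rightarrow> (nat \<Rightarrow> complex) \<Rightarrow> complex" where
  "laurent_mono n r x = (\<Prod>j<n. x j powi r j)"

definition partial :: "nat \<Rightarrow> ((nat \<Rightarrow> complex) \<Rightarrow> complex) \<Rightarrow> (nat \<Rightarrow> complex) \<Rightarrow> complex" where
  "partial j f x = deriv (\<lambda>t. f (x(j := t))) (x j)"

definition higher_partial :: "nat \<Rightarrow> (nat \<Rightarrow> nat) \<Rightarrow> ((nat \<Rightarrow> complex) \<Rightarrow> complex)
    \<Rightarrow> (nat \<Rightarrow> complex) \<Rightarrow> complex" where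
  "higher_partial n \<alpha> f = foldr (\<lambda>j g. (partial j ^^ \<alpha> j) g) [0..<n] f"

definition torus_pt :: "nat \<Rightarrow> (nat \<Rightarrow> complex) \<Rightarrow> bool" where
  "torus_pt n x \<longleftrightarrow> (\<forall>j<n. x j \<noteq> 0)"

text \<open>The hyperplane with (dual) coordinates a contains the k-th osculating space
  P(Im j_{k,x}) of X_A at the point x^A, i.e. a annihilates all partial derivatives
  of order at most k of the lift x \<mapsto> (x^{r_0},...,x^{r_m}) at x.\<close>
definition contains_osc :: "nat \<Rightarrow> nat \<Rightarrow> (nat \<Rightarrow> nat \<Rightarrow> int) \<Rightarrow> nat
    \<Rightarrow> (nat \<Rightarrow> complex) \<Rightarrow> (nat \<Rightarrow> complex) \<Rightarrow> bool" where
  "contains_osc n m r k x a \<longleftrightarrow>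
     (\<forall>\<alpha>::nat\<Rightarrow>nat. (\<Sum>j<n. \<alpha> j) \<le> k \<longrightarrow>
        (\<Sum>i\<le>m. a i * higher_partial n \<alpha> (laurent_mono n (r i)) x) = 0)"

text \<open>Affine cone (minus the origin) over the set of hyperplanes osculating to order k.\<close>
definition osc_hyperplanes :: "nat \<Rightarrow> nat \<Rightarrow> (nat \<Rightarrow> nat \<Rightarrow> int) \<Rightarrow> nat
    \<Rightarrow> (nat \<Rightarrow> complex) set" where
  "osc_hyperplanes n m r k = {a \<in> aff_space m. (\<exists>i\<le>m. a i \<noteq> 0) \<and>
       (\<exists>x. torus_pt n x \<and> contains_osc n m r k x a)}"

text \<open>Affine cone Y over the k-th dual variety X^(k)_A (Zariski closure).\<close>
definition dual_cone :: "nat \<Rightarrow> nat \<Rightarrow> (nat \<Rightarrow> nat \<Rightarrow> int) \<Rightarrow> nat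
    \<Rightarrow> (nat \<Rightarrow> complex) set" where
  "dual_cone n m r k = zariski_closure m (osc_hyperplanes n m r k)"

definition ideal_Q :: "nat \<Rightarrow> (nat \<Rightarrow> complex) set \<Rightarrow> rat mpoly set" where
  "ideal_Q m Y = {F. vars_below (Suc m) F \<and> (\<forall>a\<in>Y. eval_q F a = 0)}"

definition wt :: "(nat \<Rightarrow> real) \<Rightarrow> (nat \<Rightarrow>\<^sub>0 nat) \<Rightarrow> real" where
  "wt w u = (\<Sum>i\<in>Poly_Mapping.keys u. w i * real (Poly_Mapping.lookup u i))"

text \<open>Initial form (min convention): the terms of F of minimal w-weight.\<close>
definition init_form :: "(nat \<Rightarrow> real) \<Rightarrow> rat mpoly \<Rightarrow> rat mpoly" where
  "init_form w F = Abs_poly_mapping (\<lambda>u. if u \<in> Poly_Mapping.keys F \<and> wt w u = Min (wt w ` Poly_Mapping.keys F)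
                                         then Poly_Mapping.lookup F u else 0)"

definition is_monomial :: "rat mpoly \<Rightarrow> bool" where
  "is_monomial G \<longleftrightarrow> (\<exists>u c. c \<noteq> 0 \<and> G = Poly_Mapping.single u c)"

definition trop_cone :: "nat \<Rightarrow> (nat \<Rightarrow> complex) set \<Rightarrow> (nat \<Rightarrow> real) set" where
  "trop_cone m Y = {w. (\<forall>i>m. w i = 0) \<and>
      (\<forall>F\<in>ideal_Q m Y. F \<noteq> 0 \<longrightarrow> \<not> is_monomial (init_form w F))}"

text \<open>trop(X): image of trop(Y) in R^(m+1)/R(1,...,1); classes represented as sets.\<close>
definition trop_proj :: "nat \<Rightarrow> (nat \<Rightarrow> complex) set \<Rightarrow> (nat \<Rightarrow> real) set set" where
  "trop_proj m Y = (\<lambda>w. {v. (\<forall>i>m. v i = 0) \<and> (\<exists>c::real. \<forall>i\<le>m. v i = w i + c)}) ` trop_cone m Y"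

end

theory Submission
  imports Defs
begin


definition mmono :: "(nat \<Rightarrow>\<^sub>0 nat) \<Rightarrow> (nat \<Rightarrow> complex) \<Rightarrow> complex" where
  "mmono u z = (\<Prod>i\<in>Poly_Mapping.keys u. z i ^ Poly_Mapping.lookup u i)"

lemma mmono_superset:
  assumes "finite K" "Poly_Mapping.keys u \<subseteq> K"
  shows "mmono u z = (\<Prod>i\<in>K. z i ^ Poly_Mapping.lookup u i)"
  unfolding mmono_def
  by (rule prod.mono_neutral_left[OF assms(1,2)]) (simp add: in_keys_iff)

lemma eval_c_mmono: "eval_c F z = (\<Sum>u\<in>Poly_Mapping.keys F. Poly_Mapping.lookup F u * mmono u z)"
  unfolding eval_c_def mmono_def by simp

lemma eval_c_superset:
  assumes "finite K" "Poly_Mapping.keys F \<subseteq> K"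
  shows "eval_c F z = (\<Sum>u\<in>K. Poly_Mapping.lookup F u * mmono u z)"
  unfolding eval_c_mmono
  by (rule sum.mono_neutral_left[OF assms(1,2)]) (simp add: in_keys_iff)

lemma eval_c_add: "eval_c (F + G) z = eval_c F z + eval_c G z"
proof -
  let ?K = "Poly_Mapping.keys F \<union> Poly_Mapping.keys G"
  have "eval_c (F + G) z = (\<Sum>u\<in>?K. Poly_Mapping.lookup (F+G) u * mmono u z)"
    by (rule eval_c_superset) (auto dest: subsetD[OF keys_add])
  also have "\<dots> = (\<Sum>u\<in>?K. Poly_Mapping.lookup F u * mmono u z) + (\<Sum>u\<in>?K. Poly_Mapping.lookup G u * mmono u z)"
    by (simp add: lookup_add distrib_right sum.distrib)
  also have "\<dots> = eval_c F z + eval_c G z"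
    by (simp add: eval_c_superset[symmetric])
  finally show ?thesis .
qed

lemma eval_c_zero: "eval_c 0 z = 0"
  by (simp add: eval_c_def)

lemma eval_c_sum: "finite A \<Longrightarrow> eval_c (\<Sum>a\<in>A. G a) z = (\<Sum>a\<in>A. eval_c (G a) z)"
  by (induction A rule: finite_induct) (auto simp: eval_c_zero eval_c_add)

lemma eval_c_single: "eval_c (Poly_Mapping.single u c) z = c * mmono u z"
  by (simp add: eval_c_mmono)

lemma eval_c_singles: "finite U \<Longrightarrow> eval_c (\<Sum>u\<in>U. Poly_Mapping.single (f u) (c u)) z = (\<Sum>u\<in>U. c u * mmono (f u) z)"
  by (simp add: eval_c_sum eval_c_single)

lemma keys_singles: "Poly_Mapping.keys (\<Sum>u\<in>U. Poly_Mapping.single (f u) (c u)) \<subseteq> f ` U"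
  using keys_sum[of "\<lambda>u. Poly_Mapping.single (f u) (c u)" U] by (auto split: if_splits)

lemma keys_plus_single: "Poly_Mapping.keys (Poly_Mapping.single j (1::nat) + u) = insert j (Poly_Mapping.keys u)"
  by (auto simp: in_keys_iff lookup_add lookup_single when_def split: if_splits)

lemma mmono_plus_single: "mmono (Poly_Mapping.single j 1 + u) z = z j * mmono u z"
proof -
  let ?K = "insert j (Poly_Mapping.keys u)"
  have "mmono (Poly_Mapping.single j 1 + u) z = (\<Prod>i\<in>?K. z i ^ Poly_Mapping.lookup (Poly_Mapping.single j 1 + u) i)"
    by (rule mmono_superset) (use keys_plus_single[of j u] in auto)
  also have "\<dots> = (\<Prod>i\<in>?K. z i ^ (if i = j then 1 else 0) * z i ^ Poly_Mapping.lookup u i)"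
    by (rule prod.cong) (auto simp: lookup_add lookup_single power_add)
  also have "\<dots> = (\<Prod>i\<in>?K. z i ^ (if i = j then 1 else 0)) * (\<Prod>i\<in>?K. z i ^ Poly_Mapping.lookup u i)"
    by (rule prod.distrib)
  also have "(\<Prod>i\<in>?K. z i ^ (if i = j then 1 else 0)) = z j"
  proof -
    have "(\<Prod>i\<in>?K. z i ^ (if i = j then 1 else 0)) = (\<Prod>i\<in>?K. if i = j then z i else 1)"
      by (rule prod.cong) auto
    also have "\<dots> = z j" by (simp add: prod.delta)
    finally show ?thesis .
  qed
  also have "(\<Prod>i\<in>?K. z i ^ Poly_Mapping.lookup u i) = mmono u z"
    by (rule mmono_superset[symmetric]) auto
  finally show ?thesis .
qed

lemma total_deg_superset:
  assumes "finite K" "Poly_Mapping.keys u \<subseteq> K"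
  shows "total_deg u = (\<Sum>i\<in>K. Poly_Mapping.lookup u i)"
  unfolding total_deg_def
  by (rule sum.mono_neutral_left[OF assms(1,2)]) (simp add: in_keys_iff)

lemma total_deg_plus_single: "total_deg (Poly_Mapping.single j 1 + u) = Suc (total_deg u)"
proof -
  let ?K = "insert j (Poly_Mapping.keys u)"
  have "total_deg (Poly_Mapping.single j 1 + u) = (\<Sum>i\<in>?K. Poly_Mapping.lookup (Poly_Mapping.single j 1 + u) i)"
    by (rule total_deg_superset) (use keys_plus_single[of j u] in auto)
  also have "\<dots> = (\<Sum>i\<in>?K. (if i = j then 1 else 0)) + (\<Sum>i\<in>?K. Poly_Mapping.lookup u i)"
    by (simp add: lookup_add lookup_single sum.distrib when_def)
  also have "(\<Sum>i\<in>?K. Poly_Mapping.lookup u i) = total_deg u"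
    by (rule total_deg_superset[symmetric]) auto
  finally show ?thesis by simp
qed

lemma plus_single_Suc0[simp]:
  "Poly_Mapping.keys (Poly_Mapping.single j (Suc 0) + u) = insert j (Poly_Mapping.keys u)"
  "total_deg (Poly_Mapping.single j (Suc 0) + u) = Suc (total_deg u)"
  "mmono (Poly_Mapping.single j (Suc 0) + u) z = z j * mmono u z"
  using keys_plus_single[of j u] total_deg_plus_single[of j u] mmono_plus_single[of j u z] by simp_all

inductive polyfn :: "nat \<Rightarrow> nat \<Rightarrow> ((nat \<Rightarrow> complex) \<Rightarrow> complex) \<Rightarrow> bool" for n where
  one: "polyfn n d (\<lambda>z. 1)"
| var: "polyfn n d g \<Longrightarrow> j < n \<Longrightarrow> polyfn n (Suc d) (\<lambda>z. z j * g z)"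
| add: "polyfn n d f \<Longrightarrow> polyfn n d g \<Longrightarrow> polyfn n d (\<lambda>z. f z + g z)"
| scale: "polyfn n d g \<Longrightarrow> polyfn n d (\<lambda>z. c * g z)"
| mon: "polyfn n d g \<Longrightarrow> d \<le> d' \<Longrightarrow> polyfn n d' g"

definition reprQ :: "nat \<Rightarrow> nat \<Rightarrow> ((nat \<Rightarrow> complex) \<Rightarrow> complex) \<Rightarrow> complex mpoly \<Rightarrow> bool" where
  "reprQ n d g Q \<longleftrightarrow> vars_below n Q \<and> (\<forall>u\<in>Poly_Mapping.keys Q. total_deg u \<le> d) \<and> (\<forall>z. eval_c Q z = g z)"

lemma polyfn_repr: "polyfn n d g \<Longrightarrow> \<exists>Q. reprQ n d g Q"
proof (induction rule: polyfn.induct)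
  case (one d)
  have "reprQ n d (\<lambda>z. 1) (Poly_Mapping.single 0 1)"
    by (simp add: reprQ_def vars_below_def eval_c_def total_deg_def)
  then show ?case by blast
next
  case (var d g j)
  then obtain Q where Q: "reprQ n d g Q" by blast
  define Q' where "Q' = (\<Sum>u\<in>Poly_Mapping.keys Q. Poly_Mapping.single (Poly_Mapping.single j 1 + u) (Poly_Mapping.lookup Q u))"
  have K: "Poly_Mapping.keys Q' \<subseteq> (\<lambda>u. Poly_Mapping.single j 1 + u) ` Poly_Mapping.keys Q"
    unfolding Q'_def by (rule keys_singles)
  have "vars_below n Q'"
    using K Q var.hyps(2) unfolding vars_below_def reprQ_def
    by (auto dest!: subsetD)
  moreover have "\<forall>u\<in>Poly_Mapping.keys Q'. total_deg u \<le> Suc d"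
    using K Q unfolding reprQ_def by (auto dest!: subsetD)
  moreover have "eval_c Q' z = z j * g z" for z
  proof -
    have "eval_c Q' z = (\<Sum>u\<in>Poly_Mapping.keys Q. Poly_Mapping.lookup Q u * mmono (Poly_Mapping.single j 1 + u) z)"
      unfolding Q'_def by (rule eval_c_singles) simp
    also have "\<dots> = z j * eval_c Q z"
      by (simp add: eval_c_mmono sum_distrib_left mult_ac)
    finally show ?thesis using Q unfolding reprQ_def by simp
  qed
  ultimately show ?case unfolding reprQ_def by blast
next
  case (add d f g)
  then obtain Q1 Q2 where Q: "reprQ n d f Q1" "reprQ n d g Q2" by blast
  have "reprQ n d (\<lambda>z. f z + g z) (Q1 + Q2)"
    using Q keys_add[of Q1 Q2] unfolding reprQ_def vars_below_def
    by (auto simp: eval_c_add)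
  then show ?case by blast
next
  case (scale d g c)
  then obtain Q where Q: "reprQ n d g Q" by blast
  define Q' where "Q' = (\<Sum>u\<in>Poly_Mapping.keys Q. Poly_Mapping.single u (c * Poly_Mapping.lookup Q u))"
  have K: "Poly_Mapping.keys Q' \<subseteq> (\<lambda>u. u) ` Poly_Mapping.keys Q"
    unfolding Q'_def by (rule keys_singles)
  have E: "eval_c Q' z = c * g z" for z
  proof -
    have "eval_c Q' z = (\<Sum>u\<in>Poly_Mapping.keys Q. (c * Poly_Mapping.lookup Q u) * mmono u z)"
      unfolding Q'_def by (rule eval_c_singles) simp
    also have "\<dots> = c * eval_c Q z"
      by (simp add: eval_c_mmono sum_distrib_left mult_ac)
    finally show ?thesis using Q unfolding reprQ_def by simp
  qed
  have "reprQ n d (\<lambda>z. c * g z) Q'"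
    using K Q E unfolding reprQ_def vars_below_def by auto
  then show ?case by blast
next
  case (mon d g d')
  then show ?case unfolding reprQ_def by (meson order_trans)
qed


lemma polyfn_zero: "polyfn n d (\<lambda>z. 0)"
  using polyfn.scale[OF polyfn.one, of n d 0] by simp

lemma polyfn_cong: "polyfn n d f \<Longrightarrow> (\<And>z. f z = g z) \<Longrightarrow> polyfn n d g"
proof -
  assume "polyfn n d f" "\<And>z. f z = g z"
  then have "f = g" by auto
  with \<open>polyfn n d f\<close> show ?thesis by simp
qed

lemma polyfn_mult: "polyfn n d1 f \<Longrightarrow> polyfn n d2 g \<Longrightarrow> polyfn n (d1 + d2) (\<lambda>z. f z * g z)"
proof (induction arbitrary: g rule: polyfn.induct)
  case (one d)
  have "polyfn n (d + d2) g" by (rule polyfn.mon[OF one]) simp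
  then show ?case by simp
next
  case (var d f j)
  have "polyfn n (Suc (d + d2)) (\<lambda>z. z j * (f z * g z))"
    by (rule polyfn.var[OF var.IH[OF var.prems] var.hyps(2)])
  moreover have "(\<lambda>z. z j * (f z * g z)) = (\<lambda>z. z j * f z * g z)" by (simp add: mult_ac)
  ultimately show ?case by simp
next
  case (add d f1 f2)
  have "polyfn n (d + d2) (\<lambda>z. f1 z * g z + f2 z * g z)"
    by (rule polyfn.add[OF add.IH(1)[OF add.prems] add.IH(2)[OF add.prems]])
  then show ?case by (rule polyfn_cong) (simp add: algebra_simps)
next
  case (scale d f c)
  have "polyfn n (d + d2) (\<lambda>z. c * (f z * g z))"
    by (rule polyfn.scale[OF scale.IH[OF scale.prems]])
  then show ?case by (rule polyfn_cong) (simp add: algebra_simps)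
next
  case (mon d f d')
  show ?case by (rule polyfn.mon[OF mon.IH[OF mon.prems]]) (use mon.hyps in simp)
qed

lemma polyfn_sum: "finite I \<Longrightarrow> (\<And>i. i \<in> I \<Longrightarrow> polyfn n d (f i)) \<Longrightarrow> polyfn n d (\<lambda>z. \<Sum>i\<in>I. f i z)"
proof (induction I rule: finite_induct)
  case empty
  then show ?case by (simp add: polyfn_zero)
next
  case (insert x F)
  then show ?case by (simp add: polyfn.add)
qed

lemma polyfn_prod: "finite I \<Longrightarrow> (\<And>i. i \<in> I \<Longrightarrow> polyfn n (d i) (f i)) \<Longrightarrow> polyfn n (\<Sum>i\<in>I. d i) (\<lambda>z. \<Prod>i\<in>I. f i z)"
proof (induction I rule: finite_induct)
  case empty
  then show ?case by (simp add: polyfn.one)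
next
  case (insert x F)
  then show ?case by (simp add: polyfn_mult)
qed

lemma polyfn_var1: "j < n \<Longrightarrow> polyfn n 1 (\<lambda>z. z j)"
proof -
  assume j: "j < n"
  have "polyfn n (Suc 0) (\<lambda>z. z j * 1)" by (rule polyfn.var[OF polyfn.one j])
  then show ?thesis by simp
qed

lemma polyfn_const: "polyfn n d (\<lambda>z. c)"
  using polyfn.scale[OF polyfn.one, of n d c] by simp

lemma polyfn_pow: "j < n \<Longrightarrow> polyfn n e (\<lambda>z. z j ^ e)"
  using polyfn_prod[of "{..<e}" n "\<lambda>_. 1" "\<lambda>_ z. z j"] polyfn_var1[of j n] by simp

lemma polyfn_eval:
  assumes "vars_below n Q" "\<forall>u\<in>Poly_Mapping.keys Q. total_deg u \<le> k"
  shows "polyfn n k (eval_c Q)"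
proof -
  have "polyfn n k (\<lambda>z. \<Sum>u\<in>Poly_Mapping.keys Q. Poly_Mapping.lookup Q u * mmono u z)"
  proof (rule polyfn_sum)
    fix u assume u: "u \<in> Poly_Mapping.keys Q"
    have "polyfn n (total_deg u) (mmono u)"
      unfolding mmono_def total_deg_def
      by (rule polyfn_prod) (use u assms(1) in \<open>auto simp: vars_below_def intro: polyfn_pow\<close>)
    then have "polyfn n k (mmono u)" using assms(2) u polyfn.mon by blast
    then show "polyfn n k (\<lambda>z. Poly_Mapping.lookup Q u * mmono u z)" by (rule polyfn.scale)
  qed simp
  then show ?thesis by (rule polyfn_cong) (simp add: eval_c_mmono)
qed

definition ffp :: "nat \<Rightarrow> (nat \<Rightarrow> nat) \<Rightarrow> (nat \<Rightarrow> complex) \<Rightarrow> complex" where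
  "ffp n \<alpha> z = (\<Prod>j<n. \<Prod>l<\<alpha> j. (z j - of_nat l))"

definition adeg :: "nat \<Rightarrow> (nat \<Rightarrow> nat) \<Rightarrow> nat" where
  "adeg n \<alpha> = (\<Sum>j<n. \<alpha> j)"

lemma polyfn_ffp: "polyfn n (adeg n \<alpha>) (ffp n \<alpha>)"
  unfolding ffp_def adeg_def
proof (rule polyfn_prod)
  fix j assume j: "j \<in> {..<n}"
  have "polyfn n (\<Sum>l<\<alpha> j. 1) (\<lambda>z. \<Prod>l<\<alpha> j. (z j - of_nat l))"
  proof (rule polyfn_prod)
    fix l
    have "polyfn n 1 (\<lambda>z. z j + (- of_nat l))"
      by (rule polyfn.add[OF polyfn_var1 polyfn_const]) (use j in simp)
    then show "polyfn n 1 (\<lambda>z. z j - of_nat l)" by (rule polyfn_cong) simp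
  qed simp
  then show "polyfn n (\<alpha> j) (\<lambda>z. \<Prod>l<\<alpha> j. (z j - of_nat l))" by simp
qed simp

inductive ffspan :: "nat \<Rightarrow> nat \<Rightarrow> ((nat \<Rightarrow> complex) \<Rightarrow> complex) \<Rightarrow> bool" for n where
  gen: "adeg n \<alpha> \<le> d \<Longrightarrow> ffspan n d (ffp n \<alpha>)"
| add: "ffspan n d f \<Longrightarrow> ffspan n d g \<Longrightarrow> ffspan n d (\<lambda>z. f z + g z)"
| scale: "ffspan n d g \<Longrightarrow> ffspan n d (\<lambda>z. c * g z)"

lemma ffspan_cong: "ffspan n d f \<Longrightarrow> (\<And>z. f z = g z) \<Longrightarrow> ffspan n d g"
proof -
  assume "ffspan n d f" "\<And>z. f z = g z"
  then have "f = g" by auto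
  with \<open>ffspan n d f\<close> show ?thesis by simp
qed

lemma ffspan_mono: "ffspan n d g \<Longrightarrow> d \<le> d' \<Longrightarrow> ffspan n d' g"
proof (induction rule: ffspan.induct)
  case (gen \<alpha> d)
  then show ?case using ffspan.gen[of n \<alpha> d'] by simp
next
  case (add d f g)
  then show ?case using ffspan.add by blast
next
  case (scale d g c)
  then show ?case using ffspan.scale by blast
qed

lemma ffp_split:
  assumes "j < n"
  shows "ffp n \<alpha> z = (\<Prod>l<\<alpha> j. (z j - of_nat l)) * (\<Prod>i\<in>{..<n}-{j}. \<Prod>l<\<alpha> i. (z i - of_nat l))"
  unfolding ffp_def using assms by (simp add: prod.remove)

lemma ffp_var:
  assumes "j < n"
  shows "z j * ffp n \<alpha> z = ffp n (\<alpha>(j := Suc (\<alpha> j))) z + of_nat (\<alpha> j) * ffp n \<alpha> z"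
proof -
  define R where "R = (\<Prod>i\<in>{..<n}-{j}. \<Prod>l<\<alpha> i. (z i - of_nat l))"
  define P where "P = (\<Prod>l<\<alpha> j. (z j - of_nat l))"
  have R: "(\<Prod>i\<in>{..<n}-{j}. \<Prod>l<(\<alpha>(j := Suc (\<alpha> j))) i. (z i - of_nat l)) = R"
    unfolding R_def by (rule prod.cong) auto
  have P: "(\<Prod>l<(\<alpha>(j := Suc (\<alpha> j))) j. (z j - of_nat l)) = P * (z j - of_nat (\<alpha> j))"
    unfolding P_def by (simp only: fun_upd_same prod.lessThan_Suc)
  have 1: "ffp n (\<alpha>(j := Suc (\<alpha> j))) z = P * (z j - of_nat (\<alpha> j)) * R"
    using ffp_split[OF assms, of "\<alpha>(j := Suc (\<alpha> j))" z] unfolding R P .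
  have 2: "ffp n \<alpha> z = P * R" unfolding P_def R_def by (rule ffp_split[OF assms])
  show ?thesis unfolding 1 2 by (simp add: algebra_simps)
qed

lemma adeg_update: "j < n \<Longrightarrow> adeg n (\<alpha>(j := Suc (\<alpha> j))) = Suc (adeg n \<alpha>)"
  unfolding adeg_def by (simp add: sum.remove[of "{..<n}" j])

lemma ffspan_var: "ffspan n d g \<Longrightarrow> j < n \<Longrightarrow> ffspan n (Suc d) (\<lambda>z. z j * g z)"
proof (induction rule: ffspan.induct)
  case (gen \<alpha> d)
  have "ffspan n (Suc d) (\<lambda>z. ffp n (\<alpha>(j := Suc (\<alpha> j))) z + of_nat (\<alpha> j) * ffp n \<alpha> z)"
    by (intro ffspan.add ffspan.scale ffspan.gen) (use gen adeg_update[of j n \<alpha>] in auto)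
  then show ?case by (rule ffspan_cong) (simp add: ffp_var[OF gen(2)])
next
  case (add d f g)
  then have "ffspan n (Suc d) (\<lambda>z. z j * f z + z j * g z)" using ffspan.add by blast
  then show ?case by (rule ffspan_cong) (simp add: distrib_left)
next
  case (scale d g c)
  then have "ffspan n (Suc d) (\<lambda>z. c * (z j * g z))" using ffspan.scale by blast
  then show ?case by (rule ffspan_cong) (simp add: mult.left_commute)
qed

lemma polyfn_ffspan: "polyfn n d g \<Longrightarrow> ffspan n d g"
proof (induction rule: polyfn.induct)
  case (one d)
  have "ffspan n d (ffp n (\<lambda>_. 0))" by (rule ffspan.gen) (simp add: adeg_def)
  then show ?case by (rule ffspan_cong) (simp add: ffp_def)
next
  case (var d g j)
  then show ?case using ffspan_var by blast
next
  case (add d f g)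
  then show ?case using ffspan.add by blast
next
  case (scale d g c)
  then show ?case using ffspan.scale by blast
next
  case (mon d g d')
  then show ?case using ffspan_mono by blast
qed

lemma ffspan_polyfn: "ffspan n d g \<Longrightarrow> polyfn n d g"
proof (induction rule: ffspan.induct)
  case (gen \<alpha> d)
  then show ?case using polyfn.mon[OF polyfn_ffp] by blast
next
  case (add d f g)
  then show ?case using polyfn.add by blast
next
  case (scale d g c)
  then show ?case using polyfn.scale by blast
qed



definition agree :: "nat \<Rightarrow> ((nat \<Rightarrow> complex) \<Rightarrow> complex) \<Rightarrow> complex \<Rightarrow> (nat \<Rightarrow> int) \<Rightarrow> bool" where
  "agree n f c s \<longleftrightarrow> (\<forall>x. torus_pt n x \<longrightarrow> f x = c * (\<Prod>l<n. x l powi s l))"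

lemma prod_split_j:
  assumes "j < n"
  shows "(\<Prod>l<n. (y::nat\<Rightarrow>complex) l powi s l) = y j powi s j * (\<Prod>l\<in>{..<n}-{j}. y l powi s l)"
  using assms by (simp add: prod.remove)

lemma agree_partial:
  assumes A: "agree n f c s" and j: "j < n"
  shows "agree n (partial j f) (c * of_int (s j)) (s(j := s j - 1))"
  unfolding agree_def
proof (intro allI impI)
  fix x assume x: "torus_pt n x"
  define K where "K = (\<Prod>l\<in>{..<n}-{j}. x l powi s l)"
  have xj: "x j \<noteq> 0" using x j by (simp add: torus_pt_def)
  have ev: "eventually (\<lambda>t. f (x(j := t)) = c * K * t powi s j) (nhds (x j))"
  proof -
    have "eventually (\<lambda>t. t \<noteq> 0) (nhds (x j))" by (rule t1_space_nhds) (use xj in auto)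
    then show ?thesis
    proof eventually_elim
      case (elim t)
      have tor: "torus_pt n (x(j := t))" using x elim by (simp add: torus_pt_def)
      have "f (x(j := t)) = c * (\<Prod>l<n. (x(j := t)) l powi s l)" using A tor by (simp add: agree_def)
      also have "\<dots> = c * (t powi s j * (\<Prod>l\<in>{..<n}-{j}. (x(j := t)) l powi s l))"
        using prod_split_j[OF j, of "x(j:=t)" s] by simp
      also have "(\<Prod>l\<in>{..<n}-{j}. (x(j := t)) l powi s l) = K"
        unfolding K_def by (rule prod.cong) auto
      finally show ?case by (simp only: ac_simps)
    qed
  qed
  have "partial j f x = deriv (\<lambda>t. c * K * t powi s j) (x j)"
    unfolding partial_def by (rule deriv_cong_ev[OF ev refl])
  also have "\<dots> = c * K * (of_int (s j) * x j powi (s j - 1))"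
  proof (rule DERIV_imp_deriv)
    have "((\<lambda>t. t powi s j) has_field_derivative (of_int (s j) * x j powi (s j - 1) * 1)) (at (x j))"
      by (rule DERIV_power_int) (use xj in \<open>auto intro: DERIV_ident\<close>)
    then show "((\<lambda>t. c * K * t powi s j) has_field_derivative c * K * (of_int (s j) * x j powi (s j - 1))) (at (x j))"
      using DERIV_cmult by fastforce
  qed
  also have "(\<Prod>l<n. x l powi (s(j := s j - 1)) l) = x j powi (s j - 1) * K"
  proof -
    have "(\<Prod>l<n. x l powi (s(j := s j - 1)) l) = x j powi (s(j := s j - 1)) j * (\<Prod>l\<in>{..<n}-{j}. x l powi (s(j := s j - 1)) l)"
      by (rule prod_split_j[OF j])
    also have "(\<Prod>l\<in>{..<n}-{j}. x l powi (s(j := s j - 1)) l) = K"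
      unfolding K_def by (rule prod.cong) auto
    finally show ?thesis by simp
  qed
  ultimately show "partial j f x = c * of_int (s j) * (\<Prod>l<n. x l powi (s(j := s j - 1)) l)"
    by (simp add: mult_ac)
qed

lemma agree_partial_pow:
  assumes A: "agree n f c s" and j: "j < n"
  shows "agree n ((partial j ^^ a) f) (c * (\<Prod>l<a. (of_int (s j) - of_nat l))) (s(j := s j - int a))"
proof (induction a)
  case 0
  then show ?case using A by simp
next
  case (Suc a)
  have X: "agree n (partial j ((partial j ^^ a) f)) (c * (\<Prod>l<a. (of_int (s j) - of_nat l)) * of_int ((s(j := s j - int a)) j))
     ((s(j := s j - int a))(j := (s(j := s j - int a)) j - 1))"
    by (rule agree_partial[OF Suc j])
  moreover have E1: "(s(j := s j - int a))(j := (s(j := s j - int a)) j - 1) = s(j := s j - int (Suc a))"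
    by (simp add: fun_eq_iff)
  moreover have E2: "c * (\<Prod>l<a. (of_int (s j) - of_nat l)) * of_int ((s(j := s j - int a)) j)
      = c * (\<Prod>l<Suc a. (of_int (s j) - of_nat l))"
    by (simp add: prod.lessThan_Suc mult_ac)
  show ?case using X unfolding E1 E2 by (simp only: funpow.simps o_apply)
qed

lemma agree_foldr:
  assumes A: "agree n f c s" and "distinct ls" and "set ls \<subseteq> {..<n}"
  shows "agree n (foldr (\<lambda>j g. (partial j ^^ \<alpha> j) g) ls f)
     (c * (\<Prod>j\<in>set ls. \<Prod>l<\<alpha> j. (of_int (s j) - of_nat l)))
     (\<lambda>i. if i \<in> set ls then s i - int (\<alpha> i) else s i)"
  using assms(2,3)
proof (induction ls)
  case Nil
  then show ?case using A by simp
next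
  case (Cons j ls)
  let ?s = "\<lambda>i. if i \<in> set ls then s i - int (\<alpha> i) else s i"
  have IH: "agree n (foldr (\<lambda>j g. (partial j ^^ \<alpha> j) g) ls f)
     (c * (\<Prod>j\<in>set ls. \<Prod>l<\<alpha> j. (of_int (s j) - of_nat l))) ?s"
    using Cons by simp
  have j: "j < n" "j \<notin> set ls" using Cons.prems by auto
  have "agree n ((partial j ^^ \<alpha> j) (foldr (\<lambda>j g. (partial j ^^ \<alpha> j) g) ls f))
    (c * (\<Prod>j\<in>set ls. \<Prod>l<\<alpha> j. (of_int (s j) - of_nat l)) * (\<Prod>l<\<alpha> j. (of_int (?s j) - of_nat l)))
    (?s(j := ?s j - int (\<alpha> j)))"
    by (rule agree_partial_pow[OF IH j(1)])
  moreover have "?s(j := ?s j - int (\<alpha> j)) = (\<lambda>i. if i \<in> set (j # ls) then s i - int (\<alpha> i) else s i)"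
    using j by (auto simp: fun_eq_iff)
  moreover have "c * (\<Prod>j\<in>set ls. \<Prod>l<\<alpha> j. (of_int (s j) - of_nat l)) * (\<Prod>l<\<alpha> j. (of_int (?s j) - of_nat l))
     = c * (\<Prod>j\<in>set (j # ls). \<Prod>l<\<alpha> j. (of_int (s j) - of_nat l))"
    using j by (simp add: mult_ac)
  ultimately show ?case by simp
qed

lemma higher_partial_formula:
  assumes x: "torus_pt n x"
  shows "higher_partial n \<alpha> (laurent_mono n r) x =
     ffp n \<alpha> (\<lambda>j. of_int (r j)) * (\<Prod>l<n. x l powi (r l - int (\<alpha> l)))"
proof -
  have A: "agree n (laurent_mono n r) 1 r" by (simp add: agree_def laurent_mono_def)
  have "agree n (higher_partial n \<alpha> (laurent_mono n r))
     (1 * (\<Prod>j\<in>set [0..<n]. \<Prod>l<\<alpha> j. (of_int (r j) - of_nat l)))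
     (\<lambda>i. if i \<in> set [0..<n] then r i - int (\<alpha> i) else r i)"
    unfolding higher_partial_def by (rule agree_foldr[OF A]) auto
  then have "higher_partial n \<alpha> (laurent_mono n r) x =
     (\<Prod>j<n. \<Prod>l<\<alpha> j. (of_int (r j) - of_nat l)) * (\<Prod>l<n. x l powi (if l < n then r l - int (\<alpha> l) else r l))"
    using x by (simp add: agree_def atLeast0LessThan)
  also have "(\<Prod>l<n. x l powi (if l < n then r l - int (\<alpha> l) else r l)) = (\<Prod>l<n. x l powi (r l - int (\<alpha> l)))"
    by (rule prod.cong) auto
  finally show ?thesis by (simp add: ffp_def)
qed



lemma pair_lin: "(\<Sum>j\<le>m. (a j - t * b j) * (z j::complex)) = (\<Sum>j\<le>m. a j * z j) - t * (\<Sum>j\<le>m. b j * z j)"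
  by (simp add: algebra_simps sum_subtractf sum_distrib_left)

lemma pair_lin_add: "(\<Sum>j\<le>m. (a j + t * b j) * (z j::complex)) = (\<Sum>j\<le>m. a j * z j) + t * (\<Sum>j\<le>m. b j * z j)"
  by (simp add: algebra_simps sum.distrib sum_distrib_left)

lemma pair_span:
  assumes "\<forall>\<alpha>\<in>F. (\<Sum>j\<le>m. a j * v \<alpha> j) = (0::complex)" "\<forall>j\<le>m. y j = (\<Sum>\<alpha>\<in>F. c \<alpha> * v \<alpha> j)"
  shows "(\<Sum>j\<le>m. a j * y j) = 0"
proof -
  have "(\<Sum>j\<le>m. a j * y j) = (\<Sum>j\<le>m. \<Sum>\<alpha>\<in>F. c \<alpha> * (a j * v \<alpha> j))"
    using assms(2) by (simp add: sum_distrib_left mult_ac)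
  also have "\<dots> = (\<Sum>\<alpha>\<in>F. c \<alpha> * (\<Sum>j\<le>m. a j * v \<alpha> j))"
    by (subst sum.swap) (simp add: sum_distrib_left)
  also have "\<dots> = 0" using assms(1) by simp
  finally show ?thesis .
qed

lemma fredholm:
  fixes v :: "'b \<Rightarrow> nat \<Rightarrow> complex"
  assumes "finite A"
  shows "(\<exists>c. \<forall>j\<le>m. y j = (\<Sum>\<alpha>\<in>A. c \<alpha> * v \<alpha> j)) \<or>
         (\<exists>a. (\<forall>\<alpha>\<in>A. (\<Sum>j\<le>m. a j * v \<alpha> j) = 0) \<and> (\<Sum>j\<le>m. a j * y j) \<noteq> 0)"
  using assms
proof (induction A arbitrary: y rule: finite_induct)
  case empty
  show ?case
  proof (cases "\<forall>j\<le>m. y j = 0")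
    case True
    then show ?thesis by simp
  next
    case False
    then obtain j0 where j0: "j0 \<le> m" "y j0 \<noteq> 0" by auto
    have "(\<Sum>j\<le>m. (if j = j0 then 1 else 0) * y j) = (\<Sum>j\<le>m. if j = j0 then y j else 0)"
      by (rule sum.cong) auto
    also have "\<dots> = y j0" using j0 by (simp add: sum.delta)
    finally have "(\<Sum>j\<le>m. (if j = j0 then 1 else 0) * y j) = y j0" .
    then show ?thesis using j0 by (intro disjI2 exI[of _ "\<lambda>j. if j = j0 then 1 else 0"]) simp
  qed
next
  case (insert w F)
  note IH = insert.IH
  show ?case
  proof (cases "\<exists>c. \<forall>j\<le>m. v w j = (\<Sum>\<alpha>\<in>F. c \<alpha> * v \<alpha> j)")
    case True
    then obtain c0 where c0: "\<forall>j\<le>m. v w j = (\<Sum>\<alpha>\<in>F. c0 \<alpha> * v \<alpha> j)" by blast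
    from IH[of y] show ?thesis
    proof
      assume "\<exists>c. \<forall>j\<le>m. y j = (\<Sum>\<alpha>\<in>F. c \<alpha> * v \<alpha> j)"
      then obtain c where c: "\<forall>j\<le>m. y j = (\<Sum>\<alpha>\<in>F. c \<alpha> * v \<alpha> j)" by blast
      have "\<forall>j\<le>m. y j = (\<Sum>\<alpha>\<in>insert w F. (c(w := 0)) \<alpha> * v \<alpha> j)"
      proof (intro allI impI)
        fix j assume j: "j \<le> m"
        have "(\<Sum>\<alpha>\<in>F. (c(w := 0)) \<alpha> * v \<alpha> j) = (\<Sum>\<alpha>\<in>F. c \<alpha> * v \<alpha> j)"
          using insert.hyps by (intro sum.cong) auto
        then show "y j = (\<Sum>\<alpha>\<in>insert w F. (c(w := 0)) \<alpha> * v \<alpha> j)"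
          using insert.hyps c j by simp
      qed
      then show ?thesis by blast
    next
      assume "\<exists>a. (\<forall>\<alpha>\<in>F. (\<Sum>j\<le>m. a j * v \<alpha> j) = 0) \<and> (\<Sum>j\<le>m. a j * y j) \<noteq> 0"
      then obtain a where a: "\<forall>\<alpha>\<in>F. (\<Sum>j\<le>m. a j * v \<alpha> j) = 0" "(\<Sum>j\<le>m. a j * y j) \<noteq> 0" by blast
      have "(\<Sum>j\<le>m. a j * v w j) = 0" by (rule pair_span[OF a(1) c0])
      then show ?thesis using a by auto
    qed
  next
    case False
    from IH[of "v w"] False obtain b where
      b: "\<forall>\<alpha>\<in>F. (\<Sum>j\<le>m. b j * v \<alpha> j) = 0" "(\<Sum>j\<le>m. b j * v w j) \<noteq> 0" by blast
    define \<beta> where "\<beta> = (\<Sum>j\<le>m. b j * v w j)"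
    define t where "t = (\<Sum>j\<le>m. b j * y j) / \<beta>"
    define y' where "y' = (\<lambda>j. y j - t * v w j)"
    from IH[of y'] show ?thesis
    proof
      assume "\<exists>c. \<forall>j\<le>m. y' j = (\<Sum>\<alpha>\<in>F. c \<alpha> * v \<alpha> j)"
      then obtain c where c: "\<forall>j\<le>m. y' j = (\<Sum>\<alpha>\<in>F. c \<alpha> * v \<alpha> j)" by blast
      have "\<forall>j\<le>m. y j = (\<Sum>\<alpha>\<in>insert w F. (c(w := t)) \<alpha> * v \<alpha> j)"
      proof (intro allI impI)
        fix j assume j: "j \<le> m"
        have "(\<Sum>\<alpha>\<in>F. (c(w := t)) \<alpha> * v \<alpha> j) = (\<Sum>\<alpha>\<in>F. c \<alpha> * v \<alpha> j)"
          using insert.hyps by (intro sum.cong) auto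
        then show "y j = (\<Sum>\<alpha>\<in>insert w F. (c(w := t)) \<alpha> * v \<alpha> j)"
          using insert.hyps c j by (simp add: y'_def algebra_simps)
      qed
      then show ?thesis by blast
    next
      assume "\<exists>a. (\<forall>\<alpha>\<in>F. (\<Sum>j\<le>m. a j * v \<alpha> j) = 0) \<and> (\<Sum>j\<le>m. a j * y' j) \<noteq> 0"
      then obtain a where a: "\<forall>\<alpha>\<in>F. (\<Sum>j\<le>m. a j * v \<alpha> j) = 0" "(\<Sum>j\<le>m. a j * y' j) \<noteq> 0" by blast
      define s where "s = (\<Sum>j\<le>m. a j * v w j) / \<beta>"
      define a2 where "a2 = (\<lambda>j. a j - s * b j)"
      have "\<forall>\<alpha>\<in>insert w F. (\<Sum>j\<le>m. a2 j * v \<alpha> j) = 0"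
      proof
        fix \<alpha> assume "\<alpha> \<in> insert w F"
        then show "(\<Sum>j\<le>m. a2 j * v \<alpha> j) = 0"
        proof
          assume "\<alpha> = w"
          then show ?thesis using b(2) unfolding a2_def pair_lin s_def \<beta>_def by simp
        next
          assume "\<alpha> \<in> F"
          then show ?thesis using a(1) b(1) unfolding a2_def pair_lin by simp
        qed
      qed
      moreover have "(\<Sum>j\<le>m. a2 j * y j) = (\<Sum>j\<le>m. a j * y' j)"
      proof -
        have "(\<Sum>j\<le>m. a j * y' j) = (\<Sum>j\<le>m. a j * y j) - t * (\<Sum>j\<le>m. a j * v w j)"
          unfolding y'_def by (simp add: algebra_simps sum_subtractf sum_distrib_left)
        moreover have "(\<Sum>j\<le>m. a2 j * y j) = (\<Sum>j\<le>m. a j * y j) - s * (\<Sum>j\<le>m. b j * y j)"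
          unfolding a2_def pair_lin ..
        moreover have "s * (\<Sum>j\<le>m. b j * y j) = t * (\<Sum>j\<le>m. a j * v w j)"
          unfolding s_def t_def by simp
        ultimately show ?thesis by simp
      qed
      ultimately show ?thesis using a(2) by auto
    qed
  qed
qed

lemma torus_combination:
  fixes v :: "'b \<Rightarrow> nat \<Rightarrow> complex"
  assumes H: "\<forall>i\<le>m. \<exists>a. (\<forall>\<alpha>\<in>A. (\<Sum>j\<le>m. a j * v \<alpha> j) = 0) \<and> a i \<noteq> 0"
  shows "\<exists>a. (\<forall>\<alpha>\<in>A. (\<Sum>j\<le>m. a j * v \<alpha> j) = 0) \<and> (\<forall>i\<le>m. a i \<noteq> 0)"
proof -
  have "p \<le> Suc m \<Longrightarrow> \<exists>a. (\<forall>\<alpha>\<in>A. (\<Sum>j\<le>m. a j * v \<alpha> j) = 0) \<and> (\<forall>i<p. a i \<noteq> 0)" for p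
  proof (induction p)
    case 0
    show ?case by (intro exI[of _ "\<lambda>_. 0"]) simp
  next
    case (Suc p)
    then obtain b where b: "\<forall>\<alpha>\<in>A. (\<Sum>j\<le>m. b j * v \<alpha> j) = 0" "\<forall>i<p. b i \<noteq> 0" by auto
    from H Suc.prems obtain a where a: "\<forall>\<alpha>\<in>A. (\<Sum>j\<le>m. a j * v \<alpha> j) = 0" "a p \<noteq> 0" by auto
    define B where "B = (\<lambda>i. - b i / a i) ` {i. i \<le> p \<and> a i \<noteq> 0}"
    have "finite B" unfolding B_def by simp
    then obtain t where t: "t \<notin> B" using ex_new_if_finite[OF infinite_UNIV_char_0] by blast
    define c where "c = (\<lambda>j. b j + t * a j)"
    have "\<forall>\<alpha>\<in>A. (\<Sum>j\<le>m. c j * v \<alpha> j) = 0"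
      using a(1) b(1) unfolding c_def pair_lin_add by simp
    moreover have "\<forall>i<Suc p. c i \<noteq> 0"
    proof (intro allI impI)
      fix i assume i: "i < Suc p"
      show "c i \<noteq> 0"
      proof (cases "a i = 0")
        case True
        then have "i \<noteq> p" using a(2) by auto
        then show ?thesis using True b(2) i by (simp add: c_def)
      next
        case False
        have "- b i / a i \<in> B" unfolding B_def using False i by auto
        then have "t \<noteq> - b i / a i" using t by auto
        then show ?thesis using False unfolding c_def by (auto simp: field_simps) (metis add.commute neg_eq_iff_add_eq_0)
      qed
    qed
    ultimately show ?case by blast
  qed
  from this[of "Suc m"] show ?thesis by auto
qed



lemma ffspan_vanish:
  assumes "ffspan n d g" "d \<le> k"
    and H: "\<forall>\<alpha>. adeg n \<alpha> \<le> k \<longrightarrow> (\<Sum>i\<le>m. b i * ffp n \<alpha> (p i)) = 0"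
  shows "(\<Sum>i\<le>m. b i * g (p i)) = 0"
  using assms(1,2)
proof (induction rule: ffspan.induct)
  case (gen \<alpha> d)
  then show ?case using H by simp
next
  case (add d f g)
  then show ?case by (simp add: distrib_left sum.distrib)
next
  case (scale d g c)
  then have "c * (\<Sum>i\<le>m. b i * g (p i)) = 0" by simp
  then show ?case by (simp add: sum_distrib_left mult_ac)
qed

lemma lm_nonzero: "torus_pt n x \<Longrightarrow> laurent_mono n r x \<noteq> 0"
  by (simp add: laurent_mono_def torus_pt_def)

lemma osc_consequence:
  assumes x: "torus_pt n x" and C: "contains_osc n m r k x a"
  shows "\<forall>\<alpha>. adeg n \<alpha> \<le> k \<longrightarrow>
    (\<Sum>i\<le>m. (a i * laurent_mono n (r i) x) * ffp n \<alpha> (\<lambda>j. of_int (r i j))) = 0"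
proof (intro allI impI)
  fix \<alpha> assume \<alpha>: "adeg n \<alpha> \<le> k"
  define D where "D = (\<Prod>l<n. x l powi (- int (\<alpha> l)))"
  have D: "D \<noteq> 0" using x by (simp add: D_def torus_pt_def)
  have pw: "(\<Prod>l<n. x l powi (r i l - int (\<alpha> l))) = laurent_mono n (r i) x * D" for i
  proof -
    have "(\<Prod>l<n. x l powi (r i l - int (\<alpha> l))) = (\<Prod>l<n. x l powi (r i l) * x l powi (- int (\<alpha> l)))"
      by (rule prod.cong) (use x in \<open>auto simp: torus_pt_def power_int_add[symmetric]\<close>)
    then show ?thesis by (simp add: prod.distrib laurent_mono_def D_def)
  qed
  have "(\<Sum>i\<le>m. a i * higher_partial n \<alpha> (laurent_mono n (r i)) x) = 0"
    using C \<alpha> by (simp add: contains_osc_def adeg_def)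
  then have "(\<Sum>i\<le>m. a i * (ffp n \<alpha> (\<lambda>j. of_int (r i j)) * (laurent_mono n (r i) x * D))) = 0"
    by (simp add: higher_partial_formula[OF x] pw)
  then have "D * (\<Sum>i\<le>m. (a i * laurent_mono n (r i) x) * ffp n \<alpha> (\<lambda>j. of_int (r i j))) = 0"
    by (simp add: sum_distrib_left mult_ac)
  then show "(\<Sum>i\<le>m. (a i * laurent_mono n (r i) x) * ffp n \<alpha> (\<lambda>j. of_int (r i j))) = 0"
    using D by simp
qed

lemma S_sub_Y: "osc_hyperplanes n m r k \<subseteq> dual_cone n m r k"
  by (auto simp: dual_cone_def zariski_closure_def osc_hyperplanes_def)

lemma init_form_single: "init_form w (Poly_Mapping.single u c) = Poly_Mapping.single u c"
proof -
  have "(\<lambda>v. if v \<in> Poly_Mapping.keys (Poly_Mapping.single u c) \<and>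
      wt w v = Min (wt w ` Poly_Mapping.keys (Poly_Mapping.single u c))
      then Poly_Mapping.lookup (Poly_Mapping.single u c) v else 0) = Poly_Mapping.lookup (Poly_Mapping.single u c)"
    by (auto simp: fun_eq_iff lookup_single in_keys_iff)
  then show ?thesis unfolding init_form_def by simp
qed

lemma init_form_zero: "init_form (\<lambda>_. 0) F = F"
proof -
  have "(\<lambda>v. if v \<in> Poly_Mapping.keys F \<and>
      wt (\<lambda>_. 0) v = Min (wt (\<lambda>_. 0) ` Poly_Mapping.keys F)
      then Poly_Mapping.lookup F v else 0) = Poly_Mapping.lookup F"
  proof
    fix v
    show "(if v \<in> Poly_Mapping.keys F \<and> wt (\<lambda>_. 0) v = Min (wt (\<lambda>_. 0) ` Poly_Mapping.keys F)
      then Poly_Mapping.lookup F v else 0) = Poly_Mapping.lookup F v"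
    proof (cases "v \<in> Poly_Mapping.keys F")
      case True
      then have "wt (\<lambda>_. 0) ` Poly_Mapping.keys F = {0}" by (auto simp: wt_def)
      then show ?thesis using True by (simp add: wt_def)
    next
      case False
      then show ?thesis by (simp add: in_keys_iff)
    qed
  qed
  then show ?thesis unfolding init_form_def by simp
qed

lemma eval_c_var: "eval_c (Poly_Mapping.single (Poly_Mapping.single i0 1) 1) z = z i0"
  by (simp add: eval_c_def)

lemma eval_q_var: "eval_q (Poly_Mapping.single (Poly_Mapping.single i0 1) 1) z = z i0"
  by (simp add: eval_q_def)

lemma vars_below_var: "i0 < N \<Longrightarrow> vars_below N (Poly_Mapping.single (Poly_Mapping.single i0 1) c)"
  by (simp add: vars_below_def)



lemma dirA:
  assumes Q: "vars_below n Q" "\<forall>u\<in>Poly_Mapping.keys Q. total_deg u \<le> k"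
    and i0: "i0 \<le> m" "eval_c Q (\<lambda>j. of_int (r i0 j)) \<noteq> 0"
    and oth: "\<forall>i\<le>m. i \<noteq> i0 \<longrightarrow> eval_c Q (\<lambda>j. of_int (r i j)) = 0"
  shows "trop_proj m (dual_cone n m r k) = {}"
proof -
  let ?S = "osc_hyperplanes n m r k" and ?Y = "dual_cone n m r k"
  have FS: "ffspan n k (eval_c Q)" by (rule polyfn_ffspan[OF polyfn_eval[OF Q]])
  have S0: "a i0 = 0" if a: "a \<in> ?S" for a
  proof -
    from a obtain x where x: "torus_pt n x" "contains_osc n m r k x a"
      by (auto simp: osc_hyperplanes_def)
    define b where "b i = a i * laurent_mono n (r i) x" for i
    have "(\<Sum>i\<le>m. b i * eval_c Q (\<lambda>j. of_int (r i j))) = 0"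
      by (rule ffspan_vanish[OF FS order_refl]) (use osc_consequence[OF x] in \<open>simp add: b_def\<close>)
    moreover have "(\<Sum>i\<le>m. b i * eval_c Q (\<lambda>j. of_int (r i j))) =
        (\<Sum>i\<le>m. if i = i0 then b i0 * eval_c Q (\<lambda>j. of_int (r i0 j)) else 0)"
      by (rule sum.cong) (use oth in auto)
    ultimately have "b i0 * eval_c Q (\<lambda>j. of_int (r i0 j)) = 0" using i0(1) by (simp add: sum.delta)
    then have "b i0 = 0" using i0(2) by simp
    then show ?thesis using lm_nonzero[OF x(1)] by (simp add: b_def)
  qed
  have Y0: "a i0 = 0" if a: "a \<in> ?Y" for a
  proof -
    have "vars_below (Suc m) (Poly_Mapping.single (Poly_Mapping.single i0 1) (1::complex))"
      by (rule vars_below_var) (use i0 in simp)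
    moreover have "\<forall>b\<in>?S. eval_c (Poly_Mapping.single (Poly_Mapping.single i0 1) 1) b = 0"
      unfolding eval_c_var using S0 by blast
    ultimately have "eval_c (Poly_Mapping.single (Poly_Mapping.single i0 1) 1) a = 0"
      using a unfolding dual_cone_def zariski_closure_def by blast
    then show ?thesis unfolding eval_c_var .
  qed
  have "trop_cone m ?Y = {}"
  proof (rule ccontr)
    assume "trop_cone m ?Y \<noteq> {}"
    then obtain w where w: "w \<in> trop_cone m ?Y" by blast
    let ?F = "Poly_Mapping.single (Poly_Mapping.single i0 1) (1::rat)"
    have "?F \<in> ideal_Q m ?Y"
      unfolding ideal_Q_def mem_Collect_eq eval_q_var using Y0 vars_below_var[of i0 "Suc m" "1::rat"] i0(1) by auto
    moreover have "?F \<noteq> 0" by (metis lookup_single_eq one_neq_zero lookup_zero)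
    moreover have "is_monomial (init_form w ?F)"
      unfolding init_form_single is_monomial_def
      by (rule exI[of _ "Poly_Mapping.single i0 1"], rule exI[of _ "1::rat"]) simp
    ultimately show False using w unfolding trop_cone_def by blast
  qed
  then show ?thesis unfolding trop_proj_def by simp
qed

lemma dirB:
  assumes noQ: "\<not> (\<exists>Q::complex mpoly. vars_below n Q \<and> (\<forall>u\<in>Poly_Mapping.keys Q. total_deg u \<le> k) \<and>
       (\<exists>i0\<le>m. eval_c Q (\<lambda>j. of_int (r i0 j)) \<noteq> 0 \<and>
          (\<forall>i\<le>m. i \<noteq> i0 \<longrightarrow> eval_c Q (\<lambda>j. of_int (r i j)) = 0)))"
  shows "trop_proj m (dual_cone n m r k) \<noteq> {}"
proof -
  let ?S = "osc_hyperplanes n m r k" and ?Y = "dual_cone n m r k"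
  define A where "A = {\<alpha>. \<forall>j. (j \<in> {..<n} \<longrightarrow> \<alpha> j \<in> {..k}) \<and> (j \<notin> {..<n} \<longrightarrow> \<alpha> j = 0)} \<inter> {\<alpha>. adeg n \<alpha> \<le> k}"
  have finA: "finite A" unfolding A_def
    by (rule finite_Int, rule disjI1, rule finite_set_of_finite_funs) auto
  define v where "v \<alpha> i = ffp n \<alpha> (\<lambda>j. of_int (r i j))" for \<alpha> i
  have each: "\<exists>a. (\<forall>\<alpha>\<in>A. (\<Sum>j\<le>m. a j * v \<alpha> j) = 0) \<and> a i \<noteq> 0" if i: "i \<le> m" for i
  proof -
    define y where "y j = (if j = i then 1 else (0::complex))" for j
    from fredholm[OF finA, of m y v] show ?thesis
    proof
      assume "\<exists>c. \<forall>j\<le>m. y j = (\<Sum>\<alpha>\<in>A. c \<alpha> * v \<alpha> j)"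
      then obtain c where c: "\<forall>j\<le>m. y j = (\<Sum>\<alpha>\<in>A. c \<alpha> * v \<alpha> j)" by blast
      define g where "g z = (\<Sum>\<alpha>\<in>A. c \<alpha> * ffp n \<alpha> z)" for z
      have "polyfn n k (\<lambda>z. \<Sum>\<alpha>\<in>A. c \<alpha> * ffp n \<alpha> z)"
      proof (rule polyfn_sum[OF finA])
        fix \<alpha> assume "\<alpha> \<in> A"
        then have "adeg n \<alpha> \<le> k" by (simp add: A_def)
        then have "polyfn n k (ffp n \<alpha>)" by (rule polyfn.mon[OF polyfn_ffp])
        then show "polyfn n k (\<lambda>z. c \<alpha> * ffp n \<alpha> z)" by (rule polyfn.scale)
      qed
      then obtain Q where Q: "reprQ n k (\<lambda>z. \<Sum>\<alpha>\<in>A. c \<alpha> * ffp n \<alpha> z) Q"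
        using polyfn_repr by blast
      have ev: "eval_c Q (\<lambda>j. of_int (r l j)) = y l" if "l \<le> m" for l
        using Q c that unfolding reprQ_def v_def by simp
      have "vars_below n Q \<and> (\<forall>u\<in>Poly_Mapping.keys Q. total_deg u \<le> k) \<and>
       (\<exists>i0\<le>m. eval_c Q (\<lambda>j. of_int (r i0 j)) \<noteq> 0 \<and>
          (\<forall>i\<le>m. i \<noteq> i0 \<longrightarrow> eval_c Q (\<lambda>j. of_int (r i j)) = 0))"
        using Q i ev unfolding reprQ_def by (auto simp: y_def)
      then show ?thesis using noQ by blast
    next
      assume "\<exists>a. (\<forall>\<alpha>\<in>A. (\<Sum>j\<le>m. a j * v \<alpha> j) = 0) \<and> (\<Sum>j\<le>m. a j * y j) \<noteq> 0"
      then obtain a where a: "\<forall>\<alpha>\<in>A. (\<Sum>j\<le>m. a j * v \<alpha> j) = 0" "(\<Sum>j\<le>m. a j * y j) \<noteq> 0" by blast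
      have "(\<Sum>j\<le>m. a j * y j) = (\<Sum>j\<le>m. if j = i then a i else 0)"
        by (rule sum.cong) (auto simp: y_def)
      then have "(\<Sum>j\<le>m. a j * y j) = a i" using i by (simp add: sum.delta)
      then show ?thesis using a by auto
    qed
  qed
  obtain a where a: "\<forall>\<alpha>\<in>A. (\<Sum>j\<le>m. a j * v \<alpha> j) = 0" "\<forall>i\<le>m. a i \<noteq> 0"
    using torus_combination[of m A v] each by blast
  define a' where "a' i = (if i \<le> m then a i else 0)" for i
  have a'S: "a' \<in> ?S"
  proof -
    have "a' \<in> aff_space m" by (simp add: aff_space_def a'_def)
    moreover have "\<exists>i\<le>m. a' i \<noteq> 0" using a(2) by (intro exI[of _ 0]) (simp add: a'_def)
    moreover have "torus_pt n (\<lambda>_. 1)" by (simp add: torus_pt_def)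
    moreover have "contains_osc n m r k (\<lambda>_. 1) a'"
      unfolding contains_osc_def
    proof (intro allI impI)
      fix \<alpha> :: "nat \<Rightarrow> nat" assume \<alpha>: "(\<Sum>j<n. \<alpha> j) \<le> k"
      define \<alpha>' where "\<alpha>' j = (if j < n then \<alpha> j else 0)" for j
      have ad: "adeg n \<alpha>' = (\<Sum>j<n. \<alpha> j)" unfolding adeg_def \<alpha>'_def by (rule sum.cong) auto
      have "\<alpha>' \<in> A"
        unfolding A_def
      proof (intro IntI CollectI allI conjI impI)
        fix j assume j: "j \<in> {..<n}"
        have "\<alpha> j \<le> (\<Sum>j<n. \<alpha> j)" by (rule member_le_sum) (use j in auto)
        then show "\<alpha>' j \<in> {..k}" using \<alpha> j by (simp add: \<alpha>'_def)
      next
        fix j assume "j \<notin> {..<n}" then show "\<alpha>' j = 0" by (simp add: \<alpha>'_def)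
      next
        show "adeg n \<alpha>' \<le> k" using ad \<alpha> by simp
      qed
      then have z: "(\<Sum>j\<le>m. a j * v \<alpha>' j) = 0" using a(1) by blast
      have ff: "ffp n \<alpha>' = ffp n \<alpha>" unfolding ffp_def \<alpha>'_def by (intro ext prod.cong) auto
      have "(\<Sum>i\<le>m. a' i * higher_partial n \<alpha> (laurent_mono n (r i)) (\<lambda>_. 1)) = (\<Sum>j\<le>m. a j * v \<alpha>' j)"
        by (rule sum.cong) (simp_all add: higher_partial_formula[OF \<open>torus_pt n (\<lambda>_. 1)\<close>] a'_def v_def ff)
      then show "(\<Sum>i\<le>m. a' i * higher_partial n \<alpha> (laurent_mono n (r i)) (\<lambda>_. 1)) = 0" using z by simp
    qed
    ultimately show ?thesis unfolding osc_hyperplanes_def by blast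
  qed
  then have a'Y: "a' \<in> ?Y" using S_sub_Y by blast
  have "(\<lambda>_. 0) \<in> trop_cone m ?Y"
    unfolding trop_cone_def
  proof (intro CollectI conjI allI impI ballI)
    fix F assume F: "F \<in> ideal_Q m ?Y" "F \<noteq> 0"
    show "\<not> is_monomial (init_form (\<lambda>_. 0) F)"
    proof
      assume "is_monomial (init_form (\<lambda>_. 0) F)"
      then obtain u c where uc: "c \<noteq> 0" "F = Poly_Mapping.single u c"
        unfolding init_form_zero is_monomial_def by blast
      have vb: "vars_below (Suc m) F" and ev: "eval_q F a' = 0"
        using F(1) a'Y unfolding ideal_Q_def by auto
      have ku: "\<forall>i\<in>Poly_Mapping.keys u. i < Suc m" using vb uc unfolding vars_below_def by simp
      have "eval_q F a' = of_rat c * (\<Prod>i\<in>Poly_Mapping.keys u. a' i ^ Poly_Mapping.lookup u i)"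
        using uc by (simp add: eval_q_def)
      moreover have "(\<Prod>i\<in>Poly_Mapping.keys u. a' i ^ Poly_Mapping.lookup u i) \<noteq> 0"
        using ku a(2) by (auto simp: a'_def)
      ultimately show False using ev uc(1) by simp
    qed
  qed simp
  then show ?thesis unfolding trop_proj_def by blast
qed


theorem corollary5p6:
  fixes n m k :: nat and r :: "nat \<Rightarrow> nat \<Rightarrow> int"
  assumes distinct: "inj_on r {..m}"
    and in_Zn: "\<forall>i\<le>m. \<forall>j\<ge>n. r i j = 0"
    and spans: "\<forall>v::nat \<Rightarrow> int. \<exists>c::nat \<Rightarrow> int. \<forall>j<n. v j = (\<Sum>i\<le>m. c i * r i j)"
  shows "trop_proj m (dual_cone n m r k) = {} \<longleftrightarrow>
    (\<exists>Q::complex mpoly. vars_below n Q \<and> (\<forall>u\<in>Poly_Mapping.keys Q. total_deg u \<le> k) \<and>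
       (\<exists>i0\<le>m. eval_c Q (\<lambda>j. of_int (r i0 j)) \<noteq> 0 \<and>
          (\<forall>i\<le>m. i \<noteq> i0 \<longrightarrow> eval_c Q (\<lambda>j. of_int (r i j)) = 0)))"
proof
  assume L: "trop_proj m (dual_cone n m r k) = {}"
  show "\<exists>Q::complex mpoly. vars_below n Q \<and> (\<forall>u\<in>Poly_Mapping.keys Q. total_deg u \<le> k) \<and>
       (\<exists>i0\<le>m. eval_c Q (\<lambda>j. of_int (r i0 j)) \<noteq> 0 \<and>
          (\<forall>i\<le>m. i \<noteq> i0 \<longrightarrow> eval_c Q (\<lambda>j. of_int (r i j)) = 0))"
  proof (rule ccontr)
    assume "\<not> ?thesis"
    from dirB[OF this] L show False by blast
  qed
next
  assume "\<exists>Q::complex mpoly. vars_below n Q \<and> (\<forall>u\<in>Poly_Mapping.keys Q. total_deg u \<le> k) \<and>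
       (\<exists>i0\<le>m. eval_c Q (\<lambda>j. of_int (r i0 j)) \<noteq> 0 \<and>
          (\<forall>i\<le>m. i \<noteq> i0 \<longrightarrow> eval_c Q (\<lambda>j. of_int (r i j)) = 0))"
  then obtain Q i0 where "vars_below n Q" "\<forall>u\<in>Poly_Mapping.keys Q. total_deg u \<le> k"
    "i0 \<le> m" "eval_c Q (\<lambda>j. of_int (r i0 j)) \<noteq> 0"
    "\<forall>i\<le>m. i \<noteq> i0 \<longrightarrow> eval_c Q (\<lambda>j. of_int (r i j)) = 0" by blast
  then show "trop_proj m (dual_cone n m r k) = {}" by (rule dirA)
qed

end
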